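(* Let $P:\mathcal{C}^{\mathrm{op}}\to\mathbf{Hey}$ be a Gödel hyperdoctrine. Let $A,B$ be objects of $\mathcal{C}$, $\beta\in P(A\times B)$, and let $\alpha\in P(A)$ be existential-free. If \[ a:A\;|\;\top\vdash\alpha(a)\rightarrow\exists b.\beta(a,b),\] then \[ a:A\;|\;\top\vdash\exists b.(\alpha(a)\rightarrow\beta(a,b)).\]
   Context: A hyperdoctrine is a functor $P:\mathcal{C}^{\mathrm{op}}\to\mathbf{Hey}$ from a cartesian closed category $\mathcal{C}$ to Heyting algebras such that for every arrow $f:A\to B$ the homomorphism $P_f:P(B)\to P(A)$ has a left adjoint $\exists_f$ and a right adjoint $\forall_f$ satisfying the Beck–Chevalley conditions. A Gödel hyperdoctrine is a hyperdoctrine which (viewed as a functor to $\mathbf{Pos}$) is a Gödel doctrine. A doctrine $P:\mathcal{C}^{\mathrm{op}}\to\mathbf{Pos}$ ($\mathcal{C}$ with finite products) is existential/universal if reindexing along each product projection $\pi$ has a left adjoint $\exists_\pi$ / right adjoint $\forall_\pi$ satisfying Beck–Chevalley along pullbacks of projections. Notation: $a:A\;|\;\phi\vdash\psi$ means $\phi\le\psi$ in $P(A)$; $\exists b.\psi(a,b)=\exists_{\pi_A}\psi$, $\forall b.\psi(a,b)=\forall_{\pi_A}\psi$; $\top,\rightarrow$ are the Heyting operations in the fibre; substitution is reindexing. In an existential doctrine, $\alpha\in P(A)$ is an existential splitting if for every $B$ and $\beta\in P(A\times B)$ with $\alpha\le\exists_{\pi_A}\beta$ there is $g:A\to B$ with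 $\alpha\le P_{\langle1_A,g\rangle}\beta$; $\alpha\in P(I)$ is existential-free if $P_f\alpha$ is an existential splitting for every $f:A\to I$. In a universal doctrine $Q$, $\alpha\in Q(I)$ is universal-free if for every $f:A\to I$, every $B$ and every $\beta\in Q(A\times B)$ with $\forall_{\pi_A}\beta\le Q_f\alpha$ there is $g:A\to B$ with $Q_{\langle1_A,g\rangle}\beta\le Q_f\alpha$. Enough existential-free (universal-free) predicates: every $\alpha\in P(I)$ equals $\exists_{\pi_I}\beta$ (resp. $\forall_{\pi_I}\beta$) for some $A$ and existential-free (universal-free) $\beta\in P(I\times A)$. A Gödel doctrine: (1) $\mathcal{C}$ cartesian closed; (2) $P$ existential and universal; (3) $P$ has enough existential-free predicates; (4) existential-free predicates are stable under $\forall_\pi$ for projections $\pi$; (5) the sub-doctrine $P'$ of existential-free predicates has enough universal-free predicates. *)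

theory Defs
  imports Main
begin

record ('o,'m) cat =
  Obj :: "'o set"
  Arr :: "'m set"
  src :: "'m \<Rightarrow> 'o"
  tgt :: "'m \<Rightarrow> 'o"
  idm :: "'o \<Rightarrow> 'm"
  cmp :: "'m \<Rightarrow> 'm \<Rightarrow> 'm"   (* cmp g f = g o f *)

definition hom :: "('o,'m,'x) cat_scheme \<Rightarrow> 'm \<Rightarrow> 'o \<Rightarrow> 'o \<Rightarrow> bool" where
  "hom C f A B \<longleftrightarrow> f \<in> Arr C \<and> src C f = A \<and> tgt C f = B"

definition category :: "('o,'m,'x) cat_scheme \<Rightarrow> bool" where
  "category C \<longleftrightarrow>
     (\<forall>f \<in> Arr C. src C f \<in> Obj C \<and> tgt C f \<in> Obj C) \<and>
     (\<forall>A \<in> Obj C. hom C (idm C A) A A) \<and>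
     (\<forall>f g A B D. hom C f A B \<longrightarrow> hom C g B D \<longrightarrow> hom C (cmp C g f) A D) \<and>
     (\<forall>f A B. hom C f A B \<longrightarrow> cmp C f (idm C A) = f \<and> cmp C (idm C B) f = f) \<and>
     (\<forall>f g h A B D E. hom C f A B \<longrightarrow> hom C g B D \<longrightarrow> hom C h D E \<longrightarrow>
        cmp C h (cmp C g f) = cmp C (cmp C h g) f)"

text \<open>Cartesian closed categories, with chosen terminal object and binary products;
  exponentials are required to exist.\<close>

record ('o,'m) ccat = "('o,'m) cat" +
  trm :: "'o"
  prod :: "'o \<Rightarrow> 'o \<Rightarrow> 'o"
  pr1 :: "'o \<Rightarrow> 'o \<Rightarrow> 'm"
  pr2 :: "'o \<Rightarrow> 'o \<Rightarrow> 'm"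
  pair :: "'m \<Rightarrow> 'm \<Rightarrow> 'm"

definition cartesian :: "('o,'m,'x) ccat_scheme \<Rightarrow> bool" where
  "cartesian C \<longleftrightarrow> category C \<and>
     trm C \<in> Obj C \<and> (\<forall>A \<in> Obj C. \<exists>!f. hom C f A (trm C)) \<and>
     (\<forall>A \<in> Obj C. \<forall>B \<in> Obj C.
        prod C A B \<in> Obj C \<and> hom C (pr1 C A B) (prod C A B) A \<and> hom C (pr2 C A B) (prod C A B) B \<and>
        (\<forall>X f g. hom C f X A \<longrightarrow> hom C g X B \<longrightarrow>
            hom C (pair C f g) X (prod C A B) \<and>
            cmp C (pr1 C A B) (pair C f g) = f \<and> cmp C (pr2 C A B) (pair C f g) = g) \<and>
        (\<forall>X h. hom C h X (prod C A B) \<longrightarrow>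
            h = pair C (cmp C (pr1 C A B) h) (cmp C (pr2 C A B) h)))"

definition cartesian_closed :: "('o,'m,'x) ccat_scheme \<Rightarrow> bool" where
  "cartesian_closed C \<longleftrightarrow> cartesian C \<and>
     (\<forall>B \<in> Obj C. \<forall>D \<in> Obj C. \<exists>E ev. E \<in> Obj C \<and> hom C ev (prod C E B) D \<and>
        (\<forall>A \<in> Obj C. \<forall>f. hom C f (prod C A B) D \<longrightarrow>
           (\<exists>!h. hom C h A E \<and>
              cmp C ev (pair C (cmp C h (pr1 C A B)) (pr2 C A B)) = f)))"

definition pullback :: "('o,'m,'x) cat_scheme \<Rightarrow> 'm \<Rightarrow> 'm \<Rightarrow> 'm \<Rightarrow> 'm \<Rightarrow> bool" where
  \<comment> \<open>the square  p : W \<rightarrow> X,  q : W \<rightarrow> Y,  f : X \<rightarrow> Z,  g : Y \<rightarrow> Z  is a pullback\<close>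
  "pullback C f g p q \<longleftrightarrow>
     f \<in> Arr C \<and> g \<in> Arr C \<and> p \<in> Arr C \<and> q \<in> Arr C \<and>
     tgt C f = tgt C g \<and> src C p = src C q \<and> tgt C p = src C f \<and> tgt C q = src C g \<and>
     cmp C f p = cmp C g q \<and>
     (\<forall>h k V. hom C h V (src C f) \<longrightarrow> hom C k V (src C g) \<longrightarrow> cmp C f h = cmp C g k \<longrightarrow>
        (\<exists>!u. hom C u V (src C p) \<and> cmp C p u = h \<and> cmp C q u = k))"

text \<open>A functor into Heyting algebras: fibre carriers Fib A, fibre orders leq A,
  Heyting operations, reindexing reix f (= P_f), and adjoints Exi f, Alli f.\<close>

record ('o,'m,'p) hdoc =
  Fib :: "'o \<Rightarrow> 'p set"
  leq :: "'o \<Rightarrow> 'p \<Rightarrow> 'p \<Rightarrow> bool"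
  ptop :: "'o \<Rightarrow> 'p"
  pbot :: "'o \<Rightarrow> 'p"
  pconj :: "'o \<Rightarrow> 'p \<Rightarrow> 'p \<Rightarrow> 'p"
  pdisj :: "'o \<Rightarrow> 'p \<Rightarrow> 'p \<Rightarrow> 'p"
  pimp :: "'o \<Rightarrow> 'p \<Rightarrow> 'p \<Rightarrow> 'p"
  reix :: "'m \<Rightarrow> 'p \<Rightarrow> 'p"
  Exi :: "'m \<Rightarrow> 'p \<Rightarrow> 'p"
  Alli :: "'m \<Rightarrow> 'p \<Rightarrow> 'p"

definition heyting_fibre :: "('o,'m,'p) hdoc \<Rightarrow> 'o \<Rightarrow> bool" where
  "heyting_fibre P A \<longleftrightarrow>
     (let X = Fib P A; le = leq P A in
       (\<forall>x\<in>X. le x x) \<and>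
       (\<forall>x\<in>X. \<forall>y\<in>X. \<forall>z\<in>X. le x y \<longrightarrow> le y z \<longrightarrow> le x z) \<and>
       (\<forall>x\<in>X. \<forall>y\<in>X. le x y \<longrightarrow> le y x \<longrightarrow> x = y) \<and>
       ptop P A \<in> X \<and> (\<forall>x\<in>X. le x (ptop P A)) \<and>
       pbot P A \<in> X \<and> (\<forall>x\<in>X. le (pbot P A) x) \<and>
       (\<forall>x\<in>X. \<forall>y\<in>X. pconj P A x y \<in> X \<and>
          (\<forall>z\<in>X. le z (pconj P A x y) \<longleftrightarrow> le z x \<and> le z y)) \<and>
       (\<forall>x\<in>X. \<forall>y\<in>X. pdisj P A x y \<in> X \<and>
          (\<forall>z\<in>X. le (pdisj P A x y) z \<longleftrightarrow> le x z \<and> le y z)) \<and>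
       (\<forall>x\<in>X. \<forall>y\<in>X. pimp P A x y \<in> X \<and>
          (\<forall>z\<in>X. le z (pimp P A x y) \<longleftrightarrow> le (pconj P A z x) y)))"

definition hyperdoctrine :: "('o,'m,'x) ccat_scheme \<Rightarrow> ('o,'m,'p) hdoc \<Rightarrow> bool" where
  "hyperdoctrine C P \<longleftrightarrow> cartesian_closed C \<and>
     (\<forall>A \<in> Obj C. heyting_fibre P A) \<and>
     \<comment> \<open>functoriality (contravariant)\<close>
     (\<forall>A \<in> Obj C. \<forall>x \<in> Fib P A. reix P (idm C A) x = x) \<and>
     (\<forall>f g A B D. hom C f A B \<longrightarrow> hom C g B D \<longrightarrow>
        (\<forall>x \<in> Fib P D. reix P (cmp C g f) x = reix P f (reix P g x))) \<and>
     \<comment> \<open>reindexing is a Heyting algebra homomorphism\<close>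
     (\<forall>f A B. hom C f A B \<longrightarrow>
        (\<forall>x \<in> Fib P B. reix P f x \<in> Fib P A) \<and>
        reix P f (ptop P B) = ptop P A \<and> reix P f (pbot P B) = pbot P A \<and>
        (\<forall>x \<in> Fib P B. \<forall>y \<in> Fib P B.
           reix P f (pconj P B x y) = pconj P A (reix P f x) (reix P f y) \<and>
           reix P f (pdisj P B x y) = pdisj P A (reix P f x) (reix P f y) \<and>
           reix P f (pimp P B x y) = pimp P A (reix P f x) (reix P f y))) \<and>
     \<comment> \<open>left and right adjoints to reindexing\<close>
     (\<forall>f A B. hom C f A B \<longrightarrow>
        (\<forall>x \<in> Fib P A. Exi P f x \<in> Fib P B \<and> Alli P f x \<in> Fib P B) \<and>
        (\<forall>x \<in> Fib P A. \<forall>y \<in> Fib P B.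
           (leq P B (Exi P f x) y \<longleftrightarrow> leq P A x (reix P f y)) \<and>
           (leq P B y (Alli P f x) \<longleftrightarrow> leq P A (reix P f y) x))) \<and>
     \<comment> \<open>Beck--Chevalley conditions\<close>
     (\<forall>f g p q. pullback C f g p q \<longrightarrow>
        (\<forall>x \<in> Fib P (src C f).
           reix P g (Exi P f x) = Exi P q (reix P p x) \<and>
           reix P g (Alli P f x) = Alli P q (reix P p x)))"

definition ex_splitting :: "('o,'m,'x) ccat_scheme \<Rightarrow> ('o,'m,'p) hdoc \<Rightarrow> 'o \<Rightarrow> 'p \<Rightarrow> bool" where
  "ex_splitting C P A \<alpha> \<longleftrightarrow> \<alpha> \<in> Fib P A \<and>
     (\<forall>B \<in> Obj C. \<forall>\<beta> \<in> Fib P (prod C A B).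
        leq P A \<alpha> (Exi P (pr1 C A B) \<beta>) \<longrightarrow>
        (\<exists>g. hom C g A B \<and> leq P A \<alpha> (reix P (pair C (idm C A) g) \<beta>)))"

definition ex_free :: "('o,'m,'x) ccat_scheme \<Rightarrow> ('o,'m,'p) hdoc \<Rightarrow> 'o \<Rightarrow> 'p \<Rightarrow> bool" where
  "ex_free C P I \<alpha> \<longleftrightarrow> \<alpha> \<in> Fib P I \<and>
     (\<forall>A \<in> Obj C. \<forall>f. hom C f A I \<longrightarrow> ex_splitting C P A (reix P f \<alpha>))"

text \<open>Universal-free predicates of the sub-doctrine P' of existential-free predicates
  (its fibres are the existential-free elements; reindexing and \<forall> are those of P).\<close>

definition univ_free_exfree :: "('o,'m,'x) ccat_scheme \<Rightarrow> ('o,'m,'p) hdoc \<Rightarrow> 'o \<Rightarrow> 'p \<Rightarrow> bool" where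
  "univ_free_exfree C P I \<alpha> \<longleftrightarrow> ex_free C P I \<alpha> \<and>
     (\<forall>A \<in> Obj C. \<forall>f. hom C f A I \<longrightarrow>
        (\<forall>B \<in> Obj C. \<forall>\<beta>. ex_free C P (prod C A B) \<beta> \<longrightarrow>
           leq P A (Alli P (pr1 C A B) \<beta>) (reix P f \<alpha>) \<longrightarrow>
           (\<exists>g. hom C g A B \<and> leq P A (reix P (pair C (idm C A) g) \<beta>) (reix P f \<alpha>))))"

definition goedel_hyperdoctrine :: "('o,'m,'x) ccat_scheme \<Rightarrow> ('o,'m,'p) hdoc \<Rightarrow> bool" where
  "goedel_hyperdoctrine C P \<longleftrightarrow> hyperdoctrine C P \<and>
     \<comment> \<open>(3) enough existential-free predicates\<close>
     (\<forall>I \<in> Obj C. \<forall>\<alpha> \<in> Fib P I. \<exists>A \<in> Obj C. \<exists>\<beta>.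
        ex_free C P (prod C I A) \<beta> \<and> \<alpha> = Exi P (pr1 C I A) \<beta>) \<and>
     \<comment> \<open>(4) existential-free predicates are stable under \<forall> along projections\<close>
     (\<forall>I \<in> Obj C. \<forall>A \<in> Obj C. \<forall>\<beta>.
        ex_free C P (prod C I A) \<beta> \<longrightarrow> ex_free C P I (Alli P (pr1 C I A) \<beta>)) \<and>
     \<comment> \<open>(5) the sub-doctrine of existential-free predicates has enough universal-free predicates\<close>
     (\<forall>I \<in> Obj C. \<forall>\<alpha>. ex_free C P I \<alpha> \<longrightarrow> (\<exists>A \<in> Obj C. \<exists>\<beta>.
        univ_free_exfree C P (prod C I A) \<beta> \<and> \<alpha> = Alli P (pr1 C I A) \<beta>))"

end

theory Submission
  imports Defs
begin

lemma hf_facts: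
  assumes h: "heyting_fibre P A"
  shows "\<And>x. x \<in> Fib P A \<Longrightarrow> leq P A x x"
    and "\<And>x y z. x \<in> Fib P A \<Longrightarrow> y \<in> Fib P A \<Longrightarrow> z \<in> Fib P A \<Longrightarrow> leq P A x y \<Longrightarrow> leq P A y z \<Longrightarrow> leq P A x z"
    and "\<And>x y. x \<in> Fib P A \<Longrightarrow> y \<in> Fib P A \<Longrightarrow> leq P A x y \<Longrightarrow> leq P A y x \<Longrightarrow> x = y"
    and "ptop P A \<in> Fib P A"
    and "\<And>x. x \<in> Fib P A \<Longrightarrow> leq P A x (ptop P A)"
    and "\<And>x y. x \<in> Fib P A \<Longrightarrow> y \<in> Fib P A \<Longrightarrow> pconj P A x y \<in> Fib P A"
    and "\<And>x y z. x \<in> Fib P A \<Longrightarrow> y \<in> Fib P A \<Longrightarrow> z \<in> Fib P A \<Longrightarrow> leq P A z (pconj P A x y) \<longleftrightarrow> leq P A z x \<and> leq P A z y"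
    and "\<And>x y. x \<in> Fib P A \<Longrightarrow> y \<in> Fib P A \<Longrightarrow> pimp P A x y \<in> Fib P A"
    and "\<And>x y z. x \<in> Fib P A \<Longrightarrow> y \<in> Fib P A \<Longrightarrow> z \<in> Fib P A \<Longrightarrow> leq P A z (pimp P A x y) \<longleftrightarrow> leq P A (pconj P A z x) y"
proof -
  note c = h[unfolded heyting_fibre_def Let_def]
  note c1 = c[THEN conjunct1] and c2 = c[THEN conjunct2, THEN conjunct1]
   and c3 = c[THEN conjunct2, THEN conjunct2, THEN conjunct1]
   and c4 = c[THEN conjunct2, THEN conjunct2, THEN conjunct2, THEN conjunct1]
   and c5 = c[THEN conjunct2, THEN conjunct2, THEN conjunct2, THEN conjunct2, THEN conjunct1]
   and c8 = c[THEN conjunct2, THEN conjunct2, THEN conjunct2, THEN conjunct2, THEN conjunct2, THEN conjunct2, THEN conjunct2, THEN conjunct1]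
   and c10 = c[THEN conjunct2, THEN conjunct2, THEN conjunct2, THEN conjunct2, THEN conjunct2, THEN conjunct2, THEN conjunct2, THEN conjunct2, THEN conjunct2]
  show "\<And>x. x \<in> Fib P A \<Longrightarrow> leq P A x x" using c1 by (rule bspec)
  show "\<And>x y z. x \<in> Fib P A \<Longrightarrow> y \<in> Fib P A \<Longrightarrow> z \<in> Fib P A \<Longrightarrow> leq P A x y \<Longrightarrow> leq P A y z \<Longrightarrow> leq P A x z"
    using c2 by (meson bspec mp)
  show "\<And>x y. x \<in> Fib P A \<Longrightarrow> y \<in> Fib P A \<Longrightarrow> leq P A x y \<Longrightarrow> leq P A y x \<Longrightarrow> x = y"
    using c3 by (meson bspec mp)
  show "ptop P A \<in> Fib P A" using c4 .
  show "\<And>x. x \<in> Fib P A \<Longrightarrow> leq P A x (ptop P A)" using c5 by (rule bspec)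
  show "\<And>x y. x \<in> Fib P A \<Longrightarrow> y \<in> Fib P A \<Longrightarrow> pconj P A x y \<in> Fib P A"
    using c8 by (meson bspec conjunct1)
  show "\<And>x y z. x \<in> Fib P A \<Longrightarrow> y \<in> Fib P A \<Longrightarrow> z \<in> Fib P A \<Longrightarrow> leq P A z (pconj P A x y) \<longleftrightarrow> leq P A z x \<and> leq P A z y"
    using c8 by (meson bspec conjunct2)
  show "\<And>x y. x \<in> Fib P A \<Longrightarrow> y \<in> Fib P A \<Longrightarrow> pimp P A x y \<in> Fib P A"
    using c10 by (meson bspec conjunct1)
  show "\<And>x y z. x \<in> Fib P A \<Longrightarrow> y \<in> Fib P A \<Longrightarrow> z \<in> Fib P A \<Longrightarrow> leq P A z (pimp P A x y) \<longleftrightarrow> leq P A (pconj P A z x) y"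
    using c10 by (meson bspec conjunct2)
qed

lemma hd_reix_id: "hyperdoctrine C P \<Longrightarrow> A \<in> Obj C \<Longrightarrow> x \<in> Fib P A \<Longrightarrow> reix P (idm C A) x = x"
  unfolding hyperdoctrine_def by (elim conjE; simp)
lemma hd_reix_cmp: "hyperdoctrine C P \<Longrightarrow> hom C f A B \<Longrightarrow> hom C g B D \<Longrightarrow> x \<in> Fib P D \<Longrightarrow>
   reix P (cmp C g f) x = reix P f (reix P g x)"
  unfolding hyperdoctrine_def by (elim conjE; simp)
lemma hd_reix_fib: "hyperdoctrine C P \<Longrightarrow> hom C f A B \<Longrightarrow> x \<in> Fib P B \<Longrightarrow> reix P f x \<in> Fib P A"
  unfolding hyperdoctrine_def by (elim conjE; simp)
lemma hd_reix_conj: "hyperdoctrine C P \<Longrightarrow> hom C f A B \<Longrightarrow> x \<in> Fib P B \<Longrightarrow> y \<in> Fib P B \<Longrightarrow>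
   reix P f (pconj P B x y) = pconj P A (reix P f x) (reix P f y)"
  unfolding hyperdoctrine_def by (elim conjE; simp)
lemma hd_reix_imp: "hyperdoctrine C P \<Longrightarrow> hom C f A B \<Longrightarrow> x \<in> Fib P B \<Longrightarrow> y \<in> Fib P B \<Longrightarrow>
   reix P f (pimp P B x y) = pimp P A (reix P f x) (reix P f y)"
  unfolding hyperdoctrine_def by (elim conjE; simp)
lemma hd_exi_fib: "hyperdoctrine C P \<Longrightarrow> hom C f A B \<Longrightarrow> x \<in> Fib P A \<Longrightarrow> Exi P f x \<in> Fib P B"
  unfolding hyperdoctrine_def by (elim conjE; simp)
lemma hd_exi_adj: "hyperdoctrine C P \<Longrightarrow> hom C f A B \<Longrightarrow> x \<in> Fib P A \<Longrightarrow> y \<in> Fib P B \<Longrightarrow>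
   leq P B (Exi P f x) y \<longleftrightarrow> leq P A x (reix P f y)"
  unfolding hyperdoctrine_def by (elim conjE; simp)
lemma hd_hf: "hyperdoctrine C P \<Longrightarrow> A \<in> Obj C \<Longrightarrow> heyting_fibre P A"
  unfolding hyperdoctrine_def by (elim conjE; simp)

lemma reix_mono:
  assumes H: "hyperdoctrine C P" and f: "hom C f A B" and A: "A \<in> Obj C" and B: "B \<in> Obj C"
    and x: "x \<in> Fib P B" and y: "y \<in> Fib P B" and le: "leq P B x y"
  shows "leq P A (reix P f x) (reix P f y)"
proof -
  have hA: "heyting_fibre P A" and hB: "heyting_fibre P B" using hd_hf[OF H A] hd_hf[OF H B] .
  note FA = hf_facts[OF hA] and FB = hf_facts[OF hB]
  have c: "pconj P B x y = x"
    using FB(3)[OF FB(6)[OF x y] x] FB(7)[OF x y FB(6)[OF x y]] FB(7)[OF x y x] FB(1)[OF x] FB(1)[OF FB(6)[OF x y]] le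
    by blast
  have rf: "\<And>z. z \<in> Fib P B \<Longrightarrow> reix P f z \<in> Fib P A" using hd_reix_fib[OF H f] .
  have "reix P f x = pconj P A (reix P f x) (reix P f y)"
    using hd_reix_conj[OF H f x y] c by simp
  then show ?thesis
    using FA(7)[OF rf[OF x] rf[OF y] rf[OF x]] FA(1)[OF rf[OF x]] by metis
qed

theorem theorem5:
  fixes C :: "('o,'m,'x) ccat_scheme" and P :: "('o,'m,'p) hdoc"
  assumes "goedel_hyperdoctrine C P"
    and "A \<in> Obj C" and "B \<in> Obj C"
    and "\<beta> \<in> Fib P (prod C A B)"
    and "ex_free C P A \<alpha>"
    and "leq P A (ptop P A) (pimp P A \<alpha> (Exi P (pr1 C A B) \<beta>))"
  shows "leq P A (ptop P A)
           (Exi P (pr1 C A B) (pimp P (prod C A B) (reix P (pr1 C A B) \<alpha>) \<beta>))"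
proof -
  note A = assms(2) and B = assms(3) and bet = assms(4)
  have H: "hyperdoctrine C P" using assms(1) unfolding goedel_hyperdoctrine_def by blast
  have cc: "cartesian C" using H unfolding hyperdoctrine_def cartesian_closed_def by blast
  have cat: "category C" using cc unfolding cartesian_def by blast
  have AB: "prod C A B \<in> Obj C" and p1: "hom C (pr1 C A B) (prod C A B) A"
    and pairok: "\<And>X f g. hom C f X A \<Longrightarrow> hom C g X B \<Longrightarrow>
            hom C (pair C f g) X (prod C A B) \<and> cmp C (pr1 C A B) (pair C f g) = f"
    using cc A B unfolding cartesian_def by blast+
  have idA: "hom C (idm C A) A A" using cat A unfolding category_def by blast
  have hA: "heyting_fibre P A" and hAB: "heyting_fibre P (prod C A B)"
    using hd_hf[OF H A] hd_hf[OF H AB] by auto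
  note FA = hf_facts[OF hA] and FAB = hf_facts[OF hAB]
  have al: "\<alpha> \<in> Fib P A" using assms(5) unfolding ex_free_def by blast
  have rid: "reix P (idm C A) \<alpha> = \<alpha>" using hd_reix_id[OF H A al] .
  have spl: "ex_splitting C P A \<alpha>" using assms(5) A idA rid unfolding ex_free_def by metis
  have rf: "\<And>f X Y z. hom C f X Y \<Longrightarrow> z \<in> Fib P Y \<Longrightarrow> reix P f z \<in> Fib P X"
    using hd_reix_fib[OF H] by blast
  have exf: "\<And>z. z \<in> Fib P (prod C A B) \<Longrightarrow> Exi P (pr1 C A B) z \<in> Fib P A"
    using hd_exi_fib[OF H p1] by blast
  have adj: "\<And>z y. z \<in> Fib P (prod C A B) \<Longrightarrow> y \<in> Fib P A \<Longrightarrow>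
      leq P A (Exi P (pr1 C A B) z) y \<longleftrightarrow> leq P (prod C A B) z (reix P (pr1 C A B) y)"
    using hd_exi_adj[OF H p1] by blast
  have eb: "Exi P (pr1 C A B) \<beta> \<in> Fib P A" using exf bet .
  have "leq P A (pconj P A (ptop P A) \<alpha>) (Exi P (pr1 C A B) \<beta>)"
    using FA(9)[OF al eb FA(4)] assms(6) by blast
  moreover have "leq P A \<alpha> (pconj P A (ptop P A) \<alpha>)"
    using FA(7)[OF FA(4) al al] FA(5)[OF al] FA(1)[OF al] by blast
  ultimately have "leq P A \<alpha> (Exi P (pr1 C A B) \<beta>)"
    using FA(2)[OF al FA(6)[OF FA(4) al] eb] by blast
  then obtain g where g: "hom C g A B" and ag: "leq P A \<alpha> (reix P (pair C (idm C A) g) \<beta>)"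
    using spl B bet unfolding ex_splitting_def by blast
  define h where "h = pair C (idm C A) g"
  have h: "hom C h A (prod C A B)" and ph: "cmp C (pr1 C A B) h = idm C A"
    using pairok[OF idA g] h_def by auto
  define \<phi> where "\<phi> = pimp P (prod C A B) (reix P (pr1 C A B) \<alpha>) \<beta>"
  have ra: "reix P (pr1 C A B) \<alpha> \<in> Fib P (prod C A B)" using rf[OF p1 al] .
  have phi: "\<phi> \<in> Fib P (prod C A B)" unfolding \<phi>_def using FAB(8)[OF ra bet] .
  have hb: "reix P h \<beta> \<in> Fib P A" using rf[OF h bet] .
  have rhra: "reix P h (reix P (pr1 C A B) \<alpha>) = \<alpha>"
    using hd_reix_cmp[OF H h p1 al] ph rid by simp
  have rhphi: "reix P h \<phi> = pimp P A \<alpha> (reix P h \<beta>)"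
    unfolding \<phi>_def using hd_reix_imp[OF H h ra bet] rhra by simp
  have "leq P A (pconj P A (ptop P A) \<alpha>) \<alpha>"
    using FA(7)[OF FA(4) al FA(6)[OF FA(4) al]] FA(1)[OF FA(6)[OF FA(4) al]] by blast
  then have "leq P A (pconj P A (ptop P A) \<alpha>) (reix P h \<beta>)"
    using FA(2)[OF FA(6)[OF FA(4) al] al hb] ag h_def by blast
  then have t1: "leq P A (ptop P A) (reix P h \<phi>)"
    using rhphi FA(9)[OF al hb FA(4)] by simp
  have ephi: "Exi P (pr1 C A B) \<phi> \<in> Fib P A" using exf phi .
  have "leq P (prod C A B) \<phi> (reix P (pr1 C A B) (Exi P (pr1 C A B) \<phi>))"
    using adj[OF phi ephi] FA(1)[OF ephi] by blast
  then have "leq P A (reix P h \<phi>) (reix P h (reix P (pr1 C A B) (Exi P (pr1 C A B) \<phi>)))"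
    using reix_mono[OF H h A AB phi rf[OF p1 ephi]] by blast
  moreover have "reix P h (reix P (pr1 C A B) (Exi P (pr1 C A B) \<phi>)) = Exi P (pr1 C A B) \<phi>"
    using hd_reix_cmp[OF H h p1 ephi] ph hd_reix_id[OF H A ephi] by simp
  ultimately have "leq P A (reix P h \<phi>) (Exi P (pr1 C A B) \<phi>)" by simp
  then show ?thesis
    using FA(2)[OF FA(4) rf[OF h phi] ephi] t1 \<phi>_def by blast
qed

end
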